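(* Let $N$ be a binoid and let $$\infty\to S_1\xrightarrow{\phi_2}S_2\xrightarrow{\phi_3}\cdots\xrightarrow{\phi_n}S_n\to\infty$$ be a strongly exact sequence of finite $N$-sets. Then $\sum_{i=1}^n(-1)^i\,\#S_i=0$.
   Context: A binoid $(N,+,0,\infty)$ is a commutative monoid $(N,+,0)$ with an element $\infty$ satisfying $a+\infty=\infty$ for all $a\in N$. An $N$-set is a pointed set $(S,p)$ with a map $N\times S\to S$, $(n,s)\mapsto n+s$, such that $(n+m)+s=n+(m+s)$, $0+s=s$, $\infty+s=p$ and $n+p=p$; a homomorphism of $N$-sets is a map $\phi$ with $\phi(p)=p$ and $\phi(n+s)=n+\phi(s)$. Its image is $\operatorname{im}\phi=\phi(S)$ and its kernel is $\ker\phi=\phi^{-1}(p)$. The symbol $\infty$ at the ends denotes the one-point $N$-set. A sequence $S_0\xrightarrow{\phi_1}S_1\xrightarrow{\phi_2}\cdots\xrightarrow{\phi_n}S_n$ of $N$-sets is exact if $\operatorname{im}\phi_k=\ker\phi_{k+1}$ for all $k$, and strongly exact if moreover each $\phi_k$ is injective on $S_{k-1}\setminus\ker\phi_k$. For a finite pointed set $S$, $\#S=|S|-1$. *)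

theory Defs
  imports Main
begin

text \<open>A binoid is modelled as a commutative monoid type 'n (with + and 0)
  together with an absorbing element infty.\<close>

definition binoid_inf :: "'n::comm_monoid_add \<Rightarrow> bool" where
  "binoid_inf infty \<longleftrightarrow> (\<forall>a::'n. a + infty = infty)"

definition nset :: "'n::comm_monoid_add \<Rightarrow> 'a set \<Rightarrow> 'a \<Rightarrow> ('n \<Rightarrow> 'a \<Rightarrow> 'a) \<Rightarrow> bool" where
  "nset infty S p act \<longleftrightarrow>
     p \<in> S \<and>
     (\<forall>n. \<forall>s\<in>S. act n s \<in> S) \<and>
     (\<forall>n m. \<forall>s\<in>S. act (n + m) s = act n (act m s)) \<and>
     (\<forall>s\<in>S. act 0 s = s) \<and>
     (\<forall>s\<in>S. act infty s = p) \<and>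
     (\<forall>n. act n p = p)"

definition nset_hom ::
  "'a set \<Rightarrow> 'a \<Rightarrow> ('n \<Rightarrow> 'a \<Rightarrow> 'a) \<Rightarrow> 'b set \<Rightarrow> 'b \<Rightarrow> ('n \<Rightarrow> 'b \<Rightarrow> 'b) \<Rightarrow> ('a \<Rightarrow> 'b) \<Rightarrow> bool" where
  "nset_hom S p act T q act' \<phi> \<longleftrightarrow>
     (\<forall>s\<in>S. \<phi> s \<in> T) \<and> \<phi> p = q \<and> (\<forall>n. \<forall>s\<in>S. \<phi> (act n s) = act' n (\<phi> s))"

definition nker :: "'a set \<Rightarrow> 'b \<Rightarrow> ('a \<Rightarrow> 'b) \<Rightarrow> 'a set" where
  "nker S q \<phi> = {s \<in> S. \<phi> s = q}"

text \<open>A sequence S 0 --phi 1--> S 1 --> ... --phi m--> S m; the map phi k goes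
  from S (k-1) to S k. Exactness: im phi k = ker phi (k+1) for 1 <= k < m.\<close>
definition exact_seq :: "nat \<Rightarrow> (nat \<Rightarrow> 'a set) \<Rightarrow> (nat \<Rightarrow> 'a) \<Rightarrow> (nat \<Rightarrow> 'a \<Rightarrow> 'a) \<Rightarrow> bool" where
  "exact_seq m S p \<phi> \<longleftrightarrow>
     (\<forall>k. 1 \<le> k \<and> k < m \<longrightarrow> \<phi> k ` S (k - 1) = nker (S k) (p (k + 1)) (\<phi> (k + 1)))"

definition strongly_exact_seq :: "nat \<Rightarrow> (nat \<Rightarrow> 'a set) \<Rightarrow> (nat \<Rightarrow> 'a) \<Rightarrow> (nat \<Rightarrow> 'a \<Rightarrow> 'a) \<Rightarrow> bool" where
  "strongly_exact_seq m S p \<phi> \<longleftrightarrow>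
     exact_seq m S p \<phi> \<and>
     (\<forall>k. 1 \<le> k \<and> k \<le> m \<longrightarrow> inj_on (\<phi> k) (S (k - 1) - nker (S (k - 1)) (p k) (\<phi> k)))"

end

theory Submission
  imports Defs
begin

lemma tele: "n \<ge> 1 \<Longrightarrow> (\<Sum>i = 1..n. (-1::int) ^ i * (a i + a (Suc i))) = - a 1 + (-1)^n * a (Suc n)"
proof (induction n)
  case 0 then show ?case by simp
next
  case (Suc m)
  show ?case
  proof (cases "m = 0")
    case True then show ?thesis by simp
  next
    case False
    then have "(\<Sum>i = 1..Suc m. (-1::int) ^ i * (a i + a (Suc i)))
      = (\<Sum>i = 1..m. (-1::int) ^ i * (a i + a (Suc i))) + (-1)^(Suc m) * (a (Suc m) + a (Suc (Suc m)))"
      by simp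
    also have "\<dots> = - a 1 + (-1)^m * a (Suc m) + (-1)^(Suc m) * (a (Suc m) + a (Suc (Suc m)))"
      using Suc False by simp
    finally show ?thesis by (simp add: algebra_simps)
  qed
qed

lemma split_card:
  assumes fin: "finite A" and pA: "pa \<in> A" and fq: "f pa = q"
    and inj: "inj_on f (A - {s \<in> A. f s = q})"
  shows "int (card A) - 1 = (int (card {s \<in> A. f s = q}) - 1) + (int (card (f ` A)) - 1)"
proof -
  let ?K = "{s \<in> A. f s = q}"
  have cA: "card A = card ?K + card (A - ?K)"
    using fin by (metis (no_types, lifting) card_Diff_subset card_mono mem_Collect_eq subsetI
        le_add_diff_inverse finite_subset)
  have im: "f ` A = insert q (f ` (A - ?K))" using pA fq by auto
  have nq: "q \<notin> f ` (A - ?K)" by auto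
  have "card (f ` A) = Suc (card (A - ?K))"
    using im nq inj fin by (simp add: card_image)
  then show ?thesis using cA by simp
qed

theorem mainTheorem16:
  fixes infty :: "'n::comm_monoid_add"
    and n :: nat
    and S :: "nat \<Rightarrow> 'a set" and p :: "nat \<Rightarrow> 'a"
    and act :: "nat \<Rightarrow> 'n \<Rightarrow> 'a \<Rightarrow> 'a"
    and \<phi> :: "nat \<Rightarrow> 'a \<Rightarrow> 'a"
  assumes "binoid_inf infty"
    and "n \<ge> 1"
    and "\<And>i. i \<le> n + 1 \<Longrightarrow> nset infty (S i) (p i) (act i)"
    and "\<And>i. i \<le> n + 1 \<Longrightarrow> finite (S i)"
    and "S 0 = {p 0}"
    and "S (n + 1) = {p (n + 1)}"
    and "\<And>k. 1 \<le> k \<Longrightarrow> k \<le> n + 1 \<Longrightarrow>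
           nset_hom (S (k - 1)) (p (k - 1)) (act (k - 1)) (S k) (p k) (act k) (\<phi> k)"
    and "strongly_exact_seq (n + 1) S p \<phi>"
  shows "(\<Sum>i = 1..n. (-1::int) ^ i * (int (card (S i)) - 1)) = 0"
proof -
  define a where "a k = int (card (\<phi> k ` S (k - 1))) - 1" for k
  have ex: "\<And>k. 1 \<le> k \<Longrightarrow> k < n + 1 \<Longrightarrow> \<phi> k ` S (k - 1) = nker (S k) (p (k + 1)) (\<phi> (k + 1))"
    and inj: "\<And>k. 1 \<le> k \<Longrightarrow> k \<le> n + 1 \<Longrightarrow> inj_on (\<phi> k) (S (k - 1) - nker (S (k - 1)) (p k) (\<phi> k))"
    using assms(8) unfolding strongly_exact_seq_def exact_seq_def by auto
  have step: "int (card (S i)) - 1 = a i + a (Suc i)" if i: "1 \<le> i" "i \<le> n" for i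
  proof -
    have h: "nset_hom (S i) (p i) (act i) (S (Suc i)) (p (Suc i)) (act (Suc i)) (\<phi> (Suc i))"
      using assms(7)[of "Suc i"] i by simp
    have pS: "p i \<in> S i" using assms(3)[of i] i unfolding nset_def by simp
    have "int (card (S i)) - 1 = (int (card {s \<in> S i. \<phi> (Suc i) s = p (Suc i)}) - 1)
        + (int (card (\<phi> (Suc i) ` S i)) - 1)"
      apply (rule split_card)
      using assms(4)[of i] i pS h inj[of "Suc i"] by (auto simp: nset_hom_def nker_def)
    moreover have "\<phi> i ` S (i - 1) = {s \<in> S i. \<phi> (Suc i) s = p (Suc i)}"
      using ex[of i] i by (simp add: nker_def)
    ultimately show ?thesis unfolding a_def by simp
  qed
  have a1: "a 1 = 0"
    unfolding a_def using assms(5) by simp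
  have an: "a (Suc n) = 0"
  proof -
    have h: "nset_hom (S n) (p n) (act n) (S (Suc n)) (p (Suc n)) (act (Suc n)) (\<phi> (Suc n))"
      using assms(7)[of "Suc n"] by simp
    have pS: "p n \<in> S n" using assms(3)[of n] unfolding nset_def by simp
    have "\<phi> (Suc n) ` S n = {p (Suc n)}"
      using h pS assms(6) unfolding nset_hom_def by auto
    then show ?thesis unfolding a_def by simp
  qed
  have "(\<Sum>i = 1..n. (-1::int) ^ i * (int (card (S i)) - 1)) = (\<Sum>i = 1..n. (-1::int) ^ i * (a i + a (Suc i)))"
    by (rule sum.cong) (auto simp: step)
  also have "\<dots> = 0" using tele[OF assms(2), of a] a1 an by simp
  finally show ?thesis .
qed

end
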